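(* Let $N$ be a finite index set and let $\{y_k\}_{k\ge0}$ be a (possibly random) sequence of vectors in $\mathbb{R}^N$ whose entries satisfy, for all $k$ and $n\in N$, $$y_{k+1}(n)\ge(1-\beta_k(n))\,y_k(n)+\beta_k(n)\big(\gamma\min_{m\in N}y_k(m)-e_k(n)\big),$$ where $\gamma\in(0,1)$, the step sizes $\beta_k(n)\in[0,1]$ decay to zero with $\sum_{k=0}^\infty\beta_k(n)=\infty$, and the errors satisfy $e_k(n)\to c$ as $k\to\infty$ almost surely for each $n$, for some $c\ge0$. Suppose $y_k(n)\ge-M$ for some $M\ge0$ for all $k$ and $n$. Then $$\liminf_{k\to\infty}y_k(n)\ge-\frac{c}{1-\gamma}$$ almost surely for each $n$. *)

theory Defs
  imports "HOL-Probability.Probability"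
begin

end

theory Submission
  imports Defs
begin

lemma unbounded_tail:
  fixes b :: "nat \<Rightarrow> real"
  assumes "\<And>k. 0 \<le> b k" "\<not> summable b"
  shows "eventually (\<lambda>k. (\<Sum>j\<in>{K..<k}. b j) \<ge> R) sequentially"
proof -
  have "\<exists>k. (\<Sum>j<k. b j) > R + (\<Sum>j<K. b j)"
    proof (rule ccontr)
    assume "\<not> ?thesis"
    then have "\<And>n. (\<Sum>j<n. b j) \<le> R + (\<Sum>j<K. b j)" by (simp add: not_less)
    then show False using summableI_nonneg_bounded[of b "R + (\<Sum>j<K. b j)"] assms by blast
  qed
  then obtain k0 where k0: "(\<Sum>j<k0. b j) > R + (\<Sum>j<K. b j)" by blast
  show ?thesis
  proof (rule eventually_sequentiallyI[of "max k0 K"])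
    fix k assume k: "max k0 K \<le> k"
    have "(\<Sum>j<k0. b j) \<le> (\<Sum>j<k. b j)" by (rule sum_mono2) (use k assms in auto)
    moreover have "(\<Sum>j<k. b j) = (\<Sum>j<K. b j) + (\<Sum>j\<in>{K..<k}. b j)"
      using sum.atLeastLessThan_concat[of 0 K k b] k by (simp add: atLeast0LessThan)
    ultimately show "(\<Sum>j\<in>{K..<k}. b j) \<ge> R" using k0 by linarith
  qed
qed

lemma exp_bound:
  fixes b z :: "nat \<Rightarrow> real"
  assumes "\<And>k. k \<ge> K \<Longrightarrow> z (Suc k) \<ge> (1 - b k) * z k" "\<And>k. 0 \<le> b k" "\<And>k. b k \<le> 1"
    "\<And>k. z k \<le> 0" "k \<ge> K"
  shows "z k \<ge> z K * exp (-(\<Sum>j\<in>{K..<k}. b j))"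
  using assms(5)
proof (induction k rule: dec_induct)
  case base
  then show ?case by simp
next
  case (step k)
  let ?w = "z K * exp (-(\<Sum>j\<in>{K..<k}. b j))"
  have w: "?w \<le> 0" using assms(4)[of K] by (simp add: mult_nonpos_nonneg)
  have "z K * exp (-(\<Sum>j\<in>{K..<Suc k}. b j)) = exp (- b k) * ?w"
    using step by (simp add: exp_add[symmetric] exp_diff algebra_simps)
  also have "\<dots> \<le> (1 - b k) * ?w"
    using w exp_ge_add_one_self[of "-b k"] by (intro mult_right_mono_neg) auto
  also have "\<dots> \<le> (1 - b k) * z k" using step.IH assms(3)[of k] by (intro mult_left_mono) auto
  also have "\<dots> \<le> z (Suc k)" using step assms(1) by auto
  finally show ?case .
qed

lemma core:
  fixes y b :: "nat \<Rightarrow> real"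
  assumes "\<And>k. 0 \<le> b k" "\<And>k. b k \<le> 1" "\<not> summable b"
    "\<And>k. k \<ge> K \<Longrightarrow> y (Suc k) \<ge> (1 - b k) * y k + b k * T" "\<delta> > 0"
  shows "eventually (\<lambda>k. y k \<ge> T - \<delta>) sequentially"
proof -
  define z where "z k = min (y k - T) 0" for k
  have zs: "z (Suc k) \<ge> (1 - b k) * z k" if "k \<ge> K" for k
  proof -
    have h: "y (Suc k) - T \<ge> (1 - b k) * (y k - T)" using assms(4)[OF that] by (simp add: algebra_simps)
    show ?thesis
    proof (cases "y k - T \<ge> 0")
      case True
      then have "(1 - b k)*(y k - T) \<ge> 0" using assms(2)[of k] by simp
      then show ?thesis using h True by (simp add: z_def)
    next
      case False
      then have "(1 - b k)*(y k - T) \<le> 0" using assms(2)[of k] by (simp add: mult_nonneg_nonpos)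
      then show ?thesis using h False by (auto simp add: z_def min_def)
    qed
  qed
  have zb: "z k \<ge> z K * exp (-(\<Sum>j\<in>{K..<k}. b j))" if "k \<ge> K" for k
  proof -
    have "\<And>k. z k \<le> 0" by (simp add: z_def)
    then have "z K * exp (-(\<Sum>j\<in>{K..<k}. b j)) \<le> z k"
      using exp_bound[where K=K and z=z and b=b and k=k] zs assms(1,2) that by blast
    then show ?thesis .
  qed
  define R where "R = - z K / \<delta>"
  have zK: "z K \<le> 0" by (simp add: z_def)
  have "exp R > R" using exp_ge_add_one_self[of R] by linarith
  then have "\<delta> * exp R > - z K" using assms(5) by (simp add: R_def field_simps)
  then have Rb: "z K * exp (-R) > - \<delta>" using assms(5) by (simp add: exp_minus field_simps)
  have ev: "eventually (\<lambda>k. (\<Sum>j\<in>{K..<k}. b j) \<ge> R) sequentially"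
    using unbounded_tail[where b=b and K=K and R=R] assms(1,3) by blast
  show ?thesis
    using ev eventually_ge_at_top[of K]
  proof eventually_elim
    case (elim k)
    have "exp (-(\<Sum>j\<in>{K..<k}. b j)) \<le> exp (-R)" using elim by simp
    then have "z K * exp (-R) \<le> z K * exp (-(\<Sum>j\<in>{K..<k}. b j))"
      using zK by (intro mult_left_mono_neg) auto
    with zb[OF elim(2)] Rb have "z k > - \<delta>" by linarith
    then show ?case by (simp add: z_def)
  qed
qed

lemma det:
  fixes Y bb ee :: "nat \<Rightarrow> 'n::finite \<Rightarrow> real" and \<gamma> c B :: real
  assumes g: "0<\<gamma>" "\<gamma><1" and c: "c \<ge> 0"
   and rec: "\<forall>k n. Y (Suc k) n \<ge> (1 - bb k n) * Y k n + bb k n * (\<gamma> * Min (range (Y k)) - ee k n)"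
   and bnd: "\<forall>k n. 0 \<le> bb k n \<and> bb k n \<le> 1"
   and ns: "\<forall>n. \<not> summable (\<lambda>k. bb k n)"
   and el: "\<forall>n. (\<lambda>k. ee k n) \<longlonglongrightarrow> c"
   and lb: "\<forall>k n. Y k n \<ge> -B"
  shows "\<forall>n. liminf (\<lambda>k. ereal (Y k n)) \<ge> ereal (-c/(1-\<gamma>))"
proof -
  have step: "eventually (\<lambda>k. \<forall>n. Y k n \<ge> \<gamma>*t - c - \<epsilon>) sequentially"
    if t: "eventually (\<lambda>k. \<forall>n. Y k n \<ge> t) sequentially" and \<epsilon>: "\<epsilon>>0" for t \<epsilon>
  proof -
    have "eventually (\<lambda>k. \<forall>n. ee k n \<le> c + \<epsilon>/2) sequentially"
    proof (rule eventually_all_finite)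
      fix n
      have "eventually (\<lambda>k. ee k n < c + \<epsilon>/2) sequentially"
        using el \<epsilon> by (intro order_tendstoD(2)) auto
      then show "eventually (\<lambda>k. ee k n \<le> c + \<epsilon>/2) sequentially" by eventually_elim simp
    qed
    with t have "eventually (\<lambda>k. (\<forall>n. Y k n \<ge> t) \<and> (\<forall>n. ee k n \<le> c + \<epsilon>/2)) sequentially"
      by eventually_elim auto
    then obtain K where K: "\<And>k. k \<ge> K \<Longrightarrow> (\<forall>n. Y k n \<ge> t) \<and> (\<forall>n. ee k n \<le> c + \<epsilon>/2)"
      unfolding eventually_sequentially by blast
    show ?thesis
    proof (rule eventually_all_finite)
      fix n
      have "eventually (\<lambda>k. Y k n \<ge> (\<gamma>*t - c - \<epsilon>/2) - \<epsilon>/2) sequentially"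
      proof (rule core[of "\<lambda>k. bb k n" K "\<lambda>k. Y k n"])
        show "0 \<le> bb k n" for k using bnd by auto
        show "bb k n \<le> 1" for k using bnd by auto
        show "\<not> summable (\<lambda>k. bb k n)" using ns by auto
        show "\<epsilon>/2 > 0" using \<epsilon> by simp
        fix k assume k: "K \<le> k"
        have "t \<le> Min (range (Y k))" using K[OF k] by (subst Min_ge_iff) auto
        then have "\<gamma> * t \<le> \<gamma> * Min (range (Y k))" using g by simp
        then have "\<gamma>*t - c - \<epsilon>/2 \<le> \<gamma> * Min (range (Y k)) - ee k n" using K[OF k] by (smt (verit))
        then have "bb k n * (\<gamma>*t - c - \<epsilon>/2) \<le> bb k n * (\<gamma> * Min (range (Y k)) - ee k n)"
          using bnd by (intro mult_left_mono) auto
        then show "(1 - bb k n) * Y k n + bb k n * (\<gamma>*t - c - \<epsilon>/2) \<le> Y (Suc k) n"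
          using rec[rule_format, of k n] by linarith
      qed
      then show "eventually (\<lambda>k. Y k n \<ge> \<gamma>*t - c - \<epsilon>) sequentially" by simp
    qed
  qed
  define S where "S = {t. eventually (\<lambda>k. \<forall>n. Y k n \<ge> t) sequentially}"
  have down: "t \<in> S" if "s \<in> S" "t \<le> s" for s t
    using that unfolding S_def by (auto elim!: eventually_mono intro: order_trans)
  have BS: "-B \<in> S" using lb unfolding S_def by auto
  have all: "t \<in> S" if t: "t < -c/(1-\<gamma>)" for t
  proof (rule ccontr)
    assume nt: "t \<notin> S"
    have ub: "s \<le> t" if "s \<in> S" for s using down[OF that, of t] nt by force
    have bdd: "bdd_above S" using ub by (auto simp: bdd_above_def)
    define a where "a = Sup S"
    have at: "a \<le> t" unfolding a_def using BS ub by (intro cSup_least) auto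
    have "(1-\<gamma>) * a < (1-\<gamma>) * (-c/(1-\<gamma>))" using at t g by (intro mult_strict_left_mono) auto
    then have gap0: "(1-\<gamma>) * a < -c" using g by simp
    then have gap: "\<gamma>*a - c - a > 0" by (simp add: algebra_simps)
    define \<epsilon> where "\<epsilon> = (\<gamma>*a - c - a)/2"
    have \<epsilon>: "\<epsilon> > 0" using gap by (simp add: \<epsilon>_def)
    have "a - \<epsilon> < Sup S" using \<epsilon> a_def by simp
    then obtain s where s: "s \<in> S" "a - \<epsilon> < s" using less_cSup_iff[of S "a - \<epsilon>"] BS bdd by blast
    have "\<gamma> * s - c - \<epsilon> \<in> S" using step[of s \<epsilon>] s \<epsilon> unfolding S_def by auto
    then have "\<gamma> * s - c - \<epsilon> \<le> a" unfolding a_def using bdd by (intro cSup_upper)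
    moreover have "\<gamma>*a - \<gamma>*\<epsilon> < \<gamma> * s" using g s by (simp add: right_diff_distrib[symmetric])
    moreover have "\<gamma>*\<epsilon> \<le> \<epsilon>" using g \<epsilon> by simp
    moreover have "2*\<epsilon> = \<gamma>*a - c - a" by (simp add: \<epsilon>_def)
    ultimately show False by linarith
  qed
  show ?thesis
  proof
    fix n
    show "liminf (\<lambda>k. ereal (Y k n)) \<ge> ereal (-c/(1-\<gamma>))"
      unfolding le_Liminf_iff
    proof (intro allI impI)
      fix y' :: ereal assume "y' < ereal (-c/(1-\<gamma>))"
      then obtain t where t: "y' < ereal t" "ereal t < ereal (-c/(1-\<gamma>))" using ereal_dense2 by blast
      then have "t \<in> S" using all by simp
      then have "eventually (\<lambda>k. Y k n \<ge> t) sequentially" unfolding S_def by (auto elim: eventually_mono)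
      then show "eventually (\<lambda>k. y' < ereal (Y k n)) sequentially"
        by eventually_elim (use t(1) in \<open>auto intro: less_le_trans\<close>)
    qed
  qed
qed

theorem lemma3:
  fixes M :: "'w measure"
    and y :: "nat \<Rightarrow> 'w \<Rightarrow> 'n::finite \<Rightarrow> real"
    and \<beta> :: "nat \<Rightarrow> 'w \<Rightarrow> 'n \<Rightarrow> real"
    and e :: "nat \<Rightarrow> 'w \<Rightarrow> 'n \<Rightarrow> real"
    and \<gamma> c B :: real
  assumes "prob_space M"
    and "0 < \<gamma>" and "\<gamma> < 1"
    and "c \<ge> 0" and "B \<ge> 0"
    and "AE \<omega> in M. \<forall>k n. y (Suc k) \<omega> n \<ge>
            (1 - \<beta> k \<omega> n) * y k \<omega> n
            + \<beta> k \<omega> n * (\<gamma> * Min (range (y k \<omega>)) - e k \<omega> n)"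
    and "AE \<omega> in M. \<forall>k n. 0 \<le> \<beta> k \<omega> n \<and> \<beta> k \<omega> n \<le> 1"
    and "AE \<omega> in M. \<forall>n. (\<lambda>k. \<beta> k \<omega> n) \<longlonglongrightarrow> 0"
    and "AE \<omega> in M. \<forall>n. \<not> summable (\<lambda>k. \<beta> k \<omega> n)"
    and "AE \<omega> in M. \<forall>n. (\<lambda>k. e k \<omega> n) \<longlonglongrightarrow> c"
    and "AE \<omega> in M. \<forall>k n. y k \<omega> n \<ge> - B"
  shows "AE \<omega> in M. \<forall>n.
           liminf (\<lambda>k. ereal (y k \<omega> n)) \<ge> ereal (- c / (1 - \<gamma>))"
  using assms(6,7,9,10,11)
proof eventually_elim
  case (elim \<omega>)
  show ?case
    using det[where \<gamma>=\<gamma> and c=c and Y="\<lambda>k. y k \<omega>" and bb="\<lambda>k. \<beta> k \<omega>" and ee="\<lambda>k. e k \<omega>" and B=B] elim assms(2,3,4) by simp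
qed

end
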